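(* Let $\mathcal{N}=\{1,\dots,N\}$, $G$ a positive integer, $D>0$, and for each $n$ let $\rho_n>0$, $E_n>0$, $C_n,p\in\mathbb{R}$, with $\frac{\rho_1}{E_1}\le\cdots\le\frac{\rho_N}{E_N}$; let $F_n(\boldsymbol{x})=\rho_n\left(\frac{1}{\sqrt{G\sum_{n'}x_{n'}}}+\frac{1}{G}\right)+E_nx_n+C_n+p$ for $\boldsymbol{x}\in[0,D]^N$. Let $(\boldsymbol{x}^*,\boldsymbol{x}^{coop})$ be a pair of profiles of one of the two types described in the context. Consider the infinitely repeated game in which in every period $t=0,1,2,\dots$ each client $n$ chooses $x_n^t\in[0,D]$ (possibly depending on the history of past profiles) and minimizes its discounted total cost $\sum_{t=0}^\infty\delta^tF_n(\boldsymbol{x}^t)$ with common discount factor $\delta\in[0,1)$. For each $n$, let $\boldsymbol{x}_n^{least}$ be the profile in which every client $n'\neq n$ plays $x^{coop}_{n'}$ and client $n$ plays a minimizer of $F_n(\cdot,\boldsymbol{x}^{coop}_{-n})$ over $[0,D]$, and let $$\delta_n^{th}=\frac{F_n(\boldsymbol{x}^{coop})-F_n(\boldsymbol{x}_n^{least})}{F_n(\boldsymbol{x}^{*})-F_n(\boldsymbol{x}_n^{least})}.$$ Consider the strategy profile: all clients play $\boldsymbol{x}^{coop}$ in every period until some client deviates from it, after which all clients play $\boldsymbol{x}^*$ in all subsequent periods. If $\delta\ge\max\{\delta_n^{th}:n\in\mathcal{N}\}$, this strategy profile is a subgame perfect Nash equilibrium of the repeated game.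
   Context: Let $h_n=\sqrt[3]{\rho_n^2/(4GE_n^2)}$. Type A: $k\in\mathcal{N}$ satisfies $(N-k)D\le h_k\le(N+1-k)D$; $\boldsymbol{x}^*$ has $x_n^*=0$ ($n<k$), $x_k^*=h_k-(N-k)D$, $x_n^*=D$ ($n>k$); $S=(N-k)D+x_k^*$, and for $n<k$, $B_n=2\sqrt{GS^3}/(k-n)$, $O_n=D\sqrt{G}/(1/\sqrt{S}-1/\sqrt{(N-n)D+x_k^*})$; $l=\min\{n<k:\rho_n/E_n>B_n\}$ (assumed to exist); $x_l^{th}=D$ if $\rho_l/E_l>O_l$, and otherwise $x_l^{th}$ is the unique $y>0$ with $\rho_l/E_l=\sqrt{G}y/(1/\sqrt{S}-1/\sqrt{S+(k-l)y})$; for some $x^{coop}\in(0,x_l^{th}]$, $\boldsymbol{x}^{coop}$ has entries $0$ ($n<l$), $x^{coop}$ ($l\le n<k$), $x_k^*$ ($n=k$), $D$ ($n>k$). Type B: $m\in\{1,\dots,N-1\}$ satisfies $h_m<(N-m)D<h_{m+1}$; $\boldsymbol{x}^*$ has $x_n^*=0$ ($n\le m$), $D$ ($n>m$); $T=(N-m)D$, and for $n\le m$, $B'_n=2\sqrt{GT^3}/(m-n+1)$, $O'_n=D\sqrt{G}/(1/\sqrt{T}-1/\sqrt{(N-n+1)D})$; $l=\min\{n\le m:\rho_n/E_n>B'_n\}$ (assumed to exist); $x_l^{th}=D$ if $\rho_l/E_l>O'_l$, otherwise the unique $y>0$ with $\rho_l/E_l=\sqrt{G}y/(1/\sqrt{T}-1/\sqrt{T+(m-l+1)y})$;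 for some $x^{coop}\in(0,x_l^{th}]$, $\boldsymbol{x}^{coop}$ has entries $0$ ($n<l$), $x^{coop}$ ($l\le n\le m$), $D$ ($n>m$). In both types $\boldsymbol{x}^*$ is a Nash equilibrium of the one-shot game. A subgame perfect Nash equilibrium is a strategy profile inducing a Nash equilibrium of the continuation game after every history. *)

theory Defs
  imports "HOL-Analysis.Analysis" "HOL-Library.Extended_Real"
begin

text \<open>Clients are indexed by 1..N; a profile is a function nat => real
 (only the values at 1..N matter).\<close>

definition total :: "nat \<Rightarrow> (nat \<Rightarrow> real) \<Rightarrow> real" where
  "total N x = (\<Sum>i\<in>{1..N}. x i)"

text \<open>The one-shot cost F_n (real-valued; meaningful when the total is positive).\<close>
definition cost :: "nat \<Rightarrow> nat \<Rightarrow> (nat \<Rightarrow> real) \<Rightarrow> (nat \<Rightarrow> real) \<Rightarrow> (nat \<Rightarrow> real)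
    \<Rightarrow> real \<Rightarrow> nat \<Rightarrow> (nat \<Rightarrow> real) \<Rightarrow> real" where
  "cost N G \<rho> E C p n x =
     \<rho> n * (1 / sqrt (real G * total N x) + 1 / real G) + E n * x n + C n + p"

text \<open>Extended-real version: F_n = +infinity when the total contribution is 0
  (as 1/sqrt 0 = +infinity in the paper).\<close>
definition cost_ext :: "nat \<Rightarrow> nat \<Rightarrow> (nat \<Rightarrow> real) \<Rightarrow> (nat \<Rightarrow> real) \<Rightarrow> (nat \<Rightarrow> real)
    \<Rightarrow> real \<Rightarrow> nat \<Rightarrow> (nat \<Rightarrow> real) \<Rightarrow> ereal" where
  "cost_ext N G \<rho> E C p n x =
     (if total N x \<le> 0 then \<infinity> else ereal (cost N G \<rho> E C p n x))"

text \<open>The constant part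
  c = rho_n/G + C_n + p of F_n is summed separately, so that the remaining series has
  nonnegative terms and is well defined in the extended reals (possibly +infinity).\<close>
definition disc_cost :: "nat \<Rightarrow> nat \<Rightarrow> (nat \<Rightarrow> real) \<Rightarrow> (nat \<Rightarrow> real) \<Rightarrow> (nat \<Rightarrow> real)
    \<Rightarrow> real \<Rightarrow> real \<Rightarrow> nat \<Rightarrow> (nat \<Rightarrow> nat \<Rightarrow> real) \<Rightarrow> ereal" where
  "disc_cost N G \<rho> E C p \<delta> n pth =
     (\<Sum>t::nat. ereal (\<delta> ^ t) *
           (cost_ext N G \<rho> E C p n (pth t) - ereal (\<rho> n / real G + C n + p)))
     + ereal ((\<rho> n / real G + C n + p) / (1 - \<delta>))"

type_synonym history = "(nat \<Rightarrow> real) list"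
type_synonym strategy = "history \<Rightarrow> real"

fun hist_from :: "(nat \<Rightarrow> strategy) \<Rightarrow> history \<Rightarrow> nat \<Rightarrow> history" where
  "hist_from \<sigma> h 0 = h"
| "hist_from \<sigma> h (Suc t) = hist_from \<sigma> h t @ [(\<lambda>i. \<sigma> i (hist_from \<sigma> h t))]"

definition play :: "(nat \<Rightarrow> strategy) \<Rightarrow> history \<Rightarrow> nat \<Rightarrow> (nat \<Rightarrow> real)" where
  "play \<sigma> h t = (\<lambda>i. \<sigma> i (hist_from \<sigma> h t))"

definition valid_history :: "nat \<Rightarrow> real \<Rightarrow> history \<Rightarrow> bool" where
  "valid_history N D h \<longleftrightarrow> (\<forall>x\<in>set h. \<forall>i\<in>{1..N}. x i \<in> {0..D})"

definition is_SPNE :: "nat \<Rightarrow> nat \<Rightarrow> real \<Rightarrow> (nat \<Rightarrow> real) \<Rightarrow> (nat \<Rightarrow> real) \<Rightarrow> (nat \<Rightarrow> real)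
    \<Rightarrow> real \<Rightarrow> real \<Rightarrow> (nat \<Rightarrow> strategy) \<Rightarrow> bool" where
  "is_SPNE N G D \<rho> E C p \<delta> \<sigma> \<longleftrightarrow>
     (\<forall>i\<in>{1..N}. \<forall>h. \<sigma> i h \<in> {0..D}) \<and>
     (\<forall>h. valid_history N D h \<longrightarrow>
        (\<forall>n\<in>{1..N}. \<forall>\<tau>::strategy. (\<forall>h'. \<tau> h' \<in> {0..D}) \<longrightarrow>
           disc_cost N G \<rho> E C p \<delta> n (play \<sigma> h)
             \<le> disc_cost N G \<rho> E C p \<delta> n (play (\<sigma>(n := \<tau>)) h)))"

definition trigger :: "nat \<Rightarrow> (nat \<Rightarrow> real) \<Rightarrow> (nat \<Rightarrow> real) \<Rightarrow> nat \<Rightarrow> strategy" where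
  "trigger N xstar xcoop i h =
     (if \<forall>x\<in>set h. \<forall>j\<in>{1..N}. x j = xcoop j then xcoop i else xstar i)"

definition hval :: "nat \<Rightarrow> (nat \<Rightarrow> real) \<Rightarrow> (nat \<Rightarrow> real) \<Rightarrow> nat \<Rightarrow> real" where
  "hval G \<rho> E n = root 3 ((\<rho> n)\<^sup>2 / (4 * real G * (E n)\<^sup>2))"

definition typeA :: "nat \<Rightarrow> nat \<Rightarrow> real \<Rightarrow> (nat \<Rightarrow> real) \<Rightarrow> (nat \<Rightarrow> real)
    \<Rightarrow> (nat \<Rightarrow> real) \<Rightarrow> (nat \<Rightarrow> real) \<Rightarrow> bool" where
  "typeA N G D \<rho> E xstar xcoop \<longleftrightarrow>
    (\<exists>k\<in>{1..N}.
      let hk = hval G \<rho> E k;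
          xk = hk - (real N - real k) * D;
          S = (real N - real k) * D + xk;
          B = (\<lambda>n. 2 * sqrt (real G * S ^ 3) / (real k - real n));
          Ov = (\<lambda>n. D * sqrt (real G) /
                    (1 / sqrt S - 1 / sqrt ((real N - real n) * D + xk)));
          P = {n\<in>{1..<k}. \<rho> n / E n > B n};
          l = (LEAST n. n \<in> P);
          xth = (if \<rho> l / E l > Ov l then D
                 else (THE y. y > 0 \<and> \<rho> l / E l =
                        sqrt (real G) * y / (1 / sqrt S - 1 / sqrt (S + (real k - real l) * y))))
      in (real N - real k) * D \<le> hk \<and> hk \<le> (real N + 1 - real k) * D \<and> P \<noteq> {} \<and>
         (\<forall>n\<in>{1..N}. xstar n = (if n < k then 0 else if n = k then xk else D)) \<and>
         (\<exists>xc. 0 < xc \<and> xc \<le> xth \<and>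
            (\<forall>n\<in>{1..N}. xcoop n =
               (if n < l then 0 else if n < k then xc else if n = k then xk else D))))"

definition typeB :: "nat \<Rightarrow> nat \<Rightarrow> real \<Rightarrow> (nat \<Rightarrow> real) \<Rightarrow> (nat \<Rightarrow> real)
    \<Rightarrow> (nat \<Rightarrow> real) \<Rightarrow> (nat \<Rightarrow> real) \<Rightarrow> bool" where
  "typeB N G D \<rho> E xstar xcoop \<longleftrightarrow>
    (\<exists>m\<in>{1..N-1}.
      let T = (real N - real m) * D;
          B = (\<lambda>n. 2 * sqrt (real G * T ^ 3) / (real m - real n + 1));
          Ov = (\<lambda>n. D * sqrt (real G) /
                    (1 / sqrt T - 1 / sqrt ((real N - real n + 1) * D)));
          P = {n\<in>{1..m}. \<rho> n / E n > B n};
          l = (LEAST n. n \<in> P);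
          xth = (if \<rho> l / E l > Ov l then D
                 else (THE y. y > 0 \<and> \<rho> l / E l =
                        sqrt (real G) * y / (1 / sqrt T - 1 / sqrt (T + (real m - real l + 1) * y))))
      in hval G \<rho> E m < T \<and> T < hval G \<rho> E (m + 1) \<and> P \<noteq> {} \<and>
         (\<forall>n\<in>{1..N}. xstar n = (if n \<le> m then 0 else D)) \<and>
         (\<exists>xc. 0 < xc \<and> xc \<le> xth \<and>
            (\<forall>n\<in>{1..N}. xcoop n = (if n < l then 0 else if n \<le> m then xc else D))))"

text \<open>delta_n^th, where y n is client n's best response to x^coop_{-n}.\<close>
definition delta_th :: "nat \<Rightarrow> nat \<Rightarrow> (nat \<Rightarrow> real) \<Rightarrow> (nat \<Rightarrow> real) \<Rightarrow> (nat \<Rightarrow> real)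
    \<Rightarrow> real \<Rightarrow> (nat \<Rightarrow> real) \<Rightarrow> (nat \<Rightarrow> real) \<Rightarrow> (nat \<Rightarrow> real) \<Rightarrow> nat \<Rightarrow> real" where
  "delta_th N G \<rho> E C p xstar xcoop y n =
     (cost N G \<rho> E C p n xcoop - cost N G \<rho> E C p n (xcoop(n := y n))) /
     (cost N G \<rho> E C p n xstar - cost N G \<rho> E C p n (xcoop(n := y n)))"

end

theory Submission imports Defs begin

lemma total_update:
  assumes "n \<in> {1..N}"
  shows "total N (x(n:=z)) = total N x - x n + z"
proof -
  have e1: "total N (x(n:=z)) = (x(n:=z)) n + (\<Sum>i\<in>{1..N}-{n}. (x(n:=z)) i)"
    using assms unfolding total_def by (rule sum.remove[OF finite_atLeastAtMost])
  have e2: "(\<Sum>i\<in>{1..N}-{n}. (x(n:=z)) i) = (\<Sum>i\<in>{1..N}-{n}. x i)"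
    by (rule sum.cong) auto
  have e3: "total N x = x n + (\<Sum>i\<in>{1..N}-{n}. x i)"
    using assms unfolding total_def by (rule sum.remove[OF finite_atLeastAtMost])
  show ?thesis using e1 e2 e3 by simp
qed

lemma total_cong:
  assumes "\<forall>i\<in>{1..N}. x i = x' i"
  shows "total N x = total N x'"
  using assms unfolding total_def by (intro sum.cong) auto

lemma cost_ext_cong:
  assumes "n \<in> {1..N}" "\<forall>i\<in>{1..N}. x i = x' i"
  shows "cost_ext N G \<rho> E C p n x = cost_ext N G \<rho> E C p n x'"
  using assms total_cong[OF assms(2)] unfolding cost_ext_def cost_def by auto

lemma total_minus_nonneg:
  assumes "n \<in> {1..N}" "\<forall>i\<in>{1..N}. x i \<ge> 0"
  shows "total N x - x n \<ge> 0"
proof -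
  have "total N x = x n + (\<Sum>i\<in>{1..N}-{n}. x i)"
    using assms by (simp add: total_def sum.remove)
  moreover have "(\<Sum>i\<in>{1..N}-{n}. x i) \<ge> 0" using assms(2) by (intro sum_nonneg) auto
  ultimately show ?thesis by simp
qed

lemma cost_minus_nonneg:
  assumes "\<rho> n \<ge> 0" "E n \<ge> 0" "x n \<ge> 0" "total N x \<ge> 0"
  shows "cost N G \<rho> E C p n x - (\<rho> n / real G + C n + p) \<ge> 0"
proof -
  have "cost N G \<rho> E C p n x - (\<rho> n / real G + C n + p)
        = \<rho> n * (1 / sqrt (real G * total N x)) + E n * x n"
    by (simp add: cost_def algebra_simps)
  moreover have "\<rho> n * (1 / sqrt (real G * total N x)) \<ge> 0"
    using assms by (intro mult_nonneg_nonneg) (auto simp: real_sqrt_ge_zero)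
  ultimately show ?thesis using assms by simp
qed

lemma cost_ext_minus_nonneg:
  assumes "\<rho> n \<ge> 0" "E n \<ge> 0" "x n \<ge> 0"
  shows "cost_ext N G \<rho> E C p n x - ereal (\<rho> n / real G + C n + p) \<ge> 0"
  using cost_minus_nonneg[of \<rho> n E x N G C p] assms
  by (simp add: cost_ext_def)


lemma hist_mono: "t \<le> t' \<Longrightarrow> set (hist_from s h t) \<subseteq> set (hist_from s h t')"
  by (induction t') (auto simp: le_Suc_eq)

lemma hist_Suc: "hist_from s h (Suc t) = hist_from s h t @ [play s h t]"
  by (simp add: play_def)

lemma play_in_hist: "play s h t \<in> set (hist_from s h (Suc t))"
  by (simp add: play_def)

lemma tail_sums:
  fixes \<delta> K :: real and u :: "nat \<Rightarrow> real"
  assumes "0 \<le> \<delta>" "\<delta> < 1" "\<And>i. i > T \<Longrightarrow> u i = \<delta>^i * K"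
  shows "u sums (\<delta>^(Suc T) * K / (1-\<delta>) + (\<Sum>i<Suc T. u i))"
proof -
  have e: "(\<lambda>i. u (i + Suc T)) = (\<lambda>i. \<delta>^i * (\<delta>^Suc T * K))"
    using assms(3) by (auto simp: power_add)
  have "(\<lambda>i. \<delta>^i) sums (1/(1-\<delta>))" using assms by (intro geometric_sums) auto
  then have "(\<lambda>i. \<delta>^i * (\<delta>^Suc T * K)) sums (1/(1-\<delta>) * (\<delta>^Suc T * K))"
    by (rule sums_mult2)
  then have "(\<lambda>i. u (i + Suc T)) sums (\<delta>^(Suc T) * K / (1-\<delta>))" unfolding e by simp
  then show ?thesis by (rule sums_iff_shift[THEN iffD1])
qed


lemma SPNE_general:
  fixes N G :: nat and D p \<delta> :: real and \<rho> E C xstar xcoop Fl :: "nat \<Rightarrow> real"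
  assumes pos: "\<forall>n\<in>{1..N}. \<rho> n > 0 \<and> E n > 0"
  and rng: "\<forall>i\<in>{1..N}. xstar i \<in> {0..D} \<and> xcoop i \<in> {0..D}"
  and NE: "\<forall>n\<in>{1..N}. \<forall>z\<in>{0..D}. cost_ext N G \<rho> E C p n xstar \<le> cost_ext N G \<rho> E C p n (xstar(n:=z))"
  and ts: "total N xstar > 0" and tc: "total N xcoop > 0"
  and Flb: "\<forall>n\<in>{1..N}. \<forall>z\<in>{0..D}. ereal (Fl n) \<le> cost_ext N G \<rho> E C p n (xcoop(n:=z))"
  and Flnn: "\<forall>n\<in>{1..N}. Fl n - (\<rho> n / real G + C n + p) \<ge> 0"
  and dev: "\<forall>n\<in>{1..N}. cost N G \<rho> E C p n xcoop \<le> (1-\<delta>) * Fl n + \<delta> * cost N G \<rho> E C p n xstar"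
  and d0: "0 \<le> \<delta>" and d1: "\<delta> < 1"
  shows "is_SPNE N G D \<rho> E C p \<delta> (trigger N xstar xcoop)"
  unfolding is_SPNE_def
proof (intro conjI)
  let ?\<sigma> = "trigger N xstar xcoop"
  show rng\<sigma>: "\<forall>i\<in>{1..N}. \<forall>h. ?\<sigma> i h \<in> {0..D}" using rng by (auto simp: trigger_def)
  show "\<forall>h. valid_history N D h \<longrightarrow>
        (\<forall>n\<in>{1..N}. \<forall>\<tau>::strategy. (\<forall>h'. \<tau> h' \<in> {0..D}) \<longrightarrow>
           disc_cost N G \<rho> E C p \<delta> n (play ?\<sigma> h)
             \<le> disc_cost N G \<rho> E C p \<delta> n (play (?\<sigma>(n := \<tau>)) h))"
  proof (intro allI impI ballI)
    fix h n and \<tau> :: strategy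
    assume n: "n \<in> {1..N}" and \<tau>: "\<forall>h'. \<tau> h' \<in> {0..D}"
    define \<sigma>' where "\<sigma>' = ?\<sigma>(n := \<tau>)"
    define c where "c = \<rho> n / real G + C n + p"
    define ok where "ok = (\<lambda>hh::history. \<forall>x\<in>set hh. \<forall>j\<in>{1..N}. x j = xcoop j)"
    define H where "H = hist_from \<sigma>' h"
    define H0 where "H0 = hist_from ?\<sigma> h"
    define Fc where "Fc = cost N G \<rho> E C p n xcoop"
    define Fs where "Fs = cost N G \<rho> E C p n xstar"
    have \<rho>n: "\<rho> n > 0" and En: "E n > 0" using pos n by auto
    have trig: "\<And>i hh. ?\<sigma> i hh = (if ok hh then xcoop i else xstar i)"
      by (simp add: trigger_def ok_def)
    have H00: "H0 0 = h" and H0S: "\<And>t. H0 (Suc t) = H0 t @ [play ?\<sigma> h t]"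
      unfolding H0_def by (simp, rule hist_Suc)
    have H_0: "H 0 = h" and HS: "\<And>t. H (Suc t) = H t @ [play \<sigma>' h t]"
      unfolding H_def by (simp, rule hist_Suc)
    have pl0: "play ?\<sigma> h t = (if ok (H0 t) then xcoop else xstar)" for t
    proof -
      have "play ?\<sigma> h t = (\<lambda>i. ?\<sigma> i (H0 t))" by (simp add: play_def H0_def)
      then show ?thesis by (simp add: trig fun_eq_iff)
    qed
    have pl1: "play \<sigma>' h t = (if ok (H t) then xcoop(n := \<tau> (H t)) else xstar(n := \<tau> (H t)))" for t
    proof -
      have "play \<sigma>' h t = (\<lambda>i. \<sigma>' i (H t))" by (simp add: play_def H_def)
      then show ?thesis by (simp add: \<sigma>'_def trig fun_eq_iff)
    qed
    have rng': "\<And>hh. \<sigma>' n hh \<in> {0..D}" using \<tau> by (simp add: \<sigma>'_def)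
    have pn': "\<And>t. play \<sigma>' h t n \<ge> 0"
      using rng' by (simp add: play_def)
    have pn0: "\<And>t. play ?\<sigma> h t n \<ge> 0"
      using rng\<sigma> n by (simp add: play_def)
    have fnn: "0 \<le> ereal (\<delta>^t) * (cost_ext N G \<rho> E C p n (play \<sigma>' h t) - ereal c)" for t
      unfolding c_def using d0 \<rho>n En pn' cost_ext_minus_nonneg
      by (simp add: ereal_zero_le_0_iff less_imp_le)
    have gnn: "0 \<le> ereal (\<delta>^t) * (cost_ext N G \<rho> E C p n (play ?\<sigma> h t) - ereal c)" for t
      unfolding c_def using d0 \<rho>n En pn0 cost_ext_minus_nonneg
      by (simp add: ereal_zero_le_0_iff less_imp_le)
    have cxc: "cost_ext N G \<rho> E C p n xcoop = ereal Fc" using tc by (simp add: cost_ext_def Fc_def)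
    have cxs: "cost_ext N G \<rho> E C p n xstar = ereal Fs" using ts by (simp add: cost_ext_def Fs_def)
    have Fcc: "Fc - c \<ge> 0" unfolding Fc_def c_def
      using \<rho>n En rng n tc by (intro cost_minus_nonneg) auto
    have Fsc: "Fs - c \<ge> 0" unfolding Fs_def c_def
      using \<rho>n En rng n ts by (intro cost_minus_nonneg) auto
    have Flc: "Fl n - c \<ge> 0" unfolding c_def using Flnn n by auto
    have key: "(\<Sum>t. ereal (\<delta>^t) * (cost_ext N G \<rho> E C p n (play ?\<sigma> h t) - ereal c))
             \<le> (\<Sum>t. ereal (\<delta>^t) * (cost_ext N G \<rho> E C p n (play \<sigma>' h t) - ereal c))"
    proof (cases "ok h")
      case False
      have nok: "\<And>s t. \<not> ok (hist_from s h t)"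
        using False hist_mono[of 0 _ _ h] unfolding ok_def by fastforce
      have p0: "\<And>t. play ?\<sigma> h t = xstar"
        using nok pl0 unfolding H0_def by simp
      have p1: "\<And>t. play \<sigma>' h t = xstar(n := \<tau> (H t))"
        using nok pl1 unfolding H_def by simp
      show ?thesis
      proof (rule suminf_le_pos)
        fix t
        show "0 \<le> ereal (\<delta>^t) * (cost_ext N G \<rho> E C p n (play ?\<sigma> h t) - ereal c)" by (rule gnn)
        have "cost_ext N G \<rho> E C p n (play ?\<sigma> h t) \<le> cost_ext N G \<rho> E C p n (play \<sigma>' h t)"
          unfolding p0 p1 using NE n \<tau> by auto
        then show "ereal (\<delta>^t) * (cost_ext N G \<rho> E C p n (play ?\<sigma> h t) - ereal c)
            \<le> ereal (\<delta>^t) * (cost_ext N G \<rho> E C p n (play \<sigma>' h t) - ereal c)"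
          using d0 by (intro ereal_mult_left_mono ereal_minus_mono) auto
      qed
    next
      case True
      have okH0: "ok (H0 t) \<and> play ?\<sigma> h t = xcoop" for t
      proof (induction t)
        case 0
        then show ?case using True by (simp add: H00 pl0)
      next
        case (Suc t)
        then have "ok (H0 (Suc t))" by (simp add: H0S ok_def)
        then show ?case by (simp add: pl0)
      qed
      have g_eq: "(\<lambda>t. ereal (\<delta>^t) * (cost_ext N G \<rho> E C p n (play ?\<sigma> h t) - ereal c))
                 = (\<lambda>t. ereal (\<delta>^t * (Fc - c)))"
        using okH0 cxc by simp
      have bsum: "(\<lambda>t. \<delta>^t * (Fc - c)) sums ((Fc - c) / (1 - \<delta>))"
      proof -
        have "(\<lambda>i. \<delta>^i) sums (1/(1-\<delta>))" using d0 d1 by (intro geometric_sums) auto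
        then show ?thesis using sums_mult2[of "\<lambda>i. \<delta>^i" "1/(1-\<delta>)" "Fc - c"] by simp
      qed
      show ?thesis
      proof (cases "\<forall>t. \<tau> (H t) = xcoop n")
        case True
        have okH: "ok (H t) \<and> play \<sigma>' h t = xcoop" for t
        proof (induction t)
          case 0
          have "play \<sigma>' h 0 = xcoop"
            using \<open>ok h\<close> True[rule_format, of 0] by (simp add: H_0 pl1)
          then show ?case using \<open>ok h\<close> by (simp add: H_0)
        next
          case (Suc t)
          then have o: "ok (H (Suc t))" by (simp add: HS ok_def)
          then have "play \<sigma>' h (Suc t) = xcoop"
            using True by (simp add: pl1)
          then show ?case using o by simp
        qed
        then show ?thesis using okH0 by simp
      next
        case False
        define T where "T = (LEAST t. \<tau> (H t) \<noteq> xcoop n)"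
        have Tne: "\<tau> (H T) \<noteq> xcoop n" using False unfolding T_def by (metis (mono_tags, lifting) LeastI)
        have Tb: "\<And>t. t < T \<Longrightarrow> \<tau> (H t) = xcoop n" unfolding T_def using not_less_Least by blast
        have okT: "t \<le> T \<Longrightarrow> ok (H t) \<and> (t < T \<longrightarrow> play \<sigma>' h t = xcoop)" for t
        proof (induction t)
          case 0
          show ?case using \<open>ok h\<close> Tb[of 0] by (simp add: H_0 pl1)
        next
          case (Suc t)
          then have "ok (H t)" "play \<sigma>' h t = xcoop" by auto
          then have o: "ok (H (Suc t))" by (simp add: HS ok_def)
          then show ?case using Tb[of "Suc t"] by (simp add: pl1)
        qed
        have pT: "play \<sigma>' h T = xcoop(n := \<tau> (H T))"
          using okT[of T] by (simp add: pl1)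
        have nokT: "t > T \<Longrightarrow> \<not> ok (H t)" for t
        proof -
          assume "t > T"
          then have "play \<sigma>' h T \<in> set (H t)"
            using play_in_hist[of \<sigma>' h T] hist_mono[of "Suc T" t \<sigma>' h] by (auto simp: H_def)
          then show ?thesis using pT Tne n unfolding ok_def by fastforce
        qed
        have pA: "t > T \<Longrightarrow> play \<sigma>' h t = xstar(n := \<tau> (H t))" for t
          using nokT[of t] by (simp add: pl1)
        define l where "l = (\<lambda>t. if t < T then \<delta>^t * (Fc - c) else if t = T then \<delta>^T * (Fl n - c)
                                else \<delta>^t * (Fs - c))"
        have lle: "ereal (l t) \<le> ereal (\<delta>^t) * (cost_ext N G \<rho> E C p n (play \<sigma>' h t) - ereal c)" for t
        proof (cases "t < T")
          case True
          then show ?thesis using okT[of t] cxc by (simp add: l_def)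
        next
          case False
          show ?thesis
          proof (cases "t = T")
            case True
            have "ereal (Fl n) \<le> cost_ext N G \<rho> E C p n (play \<sigma>' h t)"
              unfolding True pT using Flb n \<tau> by auto
            then have "ereal (Fl n) - ereal c \<le> cost_ext N G \<rho> E C p n (play \<sigma>' h t) - ereal c"
              by (intro ereal_minus_mono) auto
            then have "ereal (\<delta>^t) * (ereal (Fl n) - ereal c)
                 \<le> ereal (\<delta>^t) * (cost_ext N G \<rho> E C p n (play \<sigma>' h t) - ereal c)"
              using d0 by (intro ereal_mult_left_mono) auto
            then show ?thesis using True by (simp add: l_def)
          next
            case False2: False
            then have tT: "t > T" using False by simp
            have "ereal Fs \<le> cost_ext N G \<rho> E C p n (play \<sigma>' h t)"
              unfolding pA[OF tT] cxs[symmetric] using NE n \<tau> by auto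
            then have "ereal Fs - ereal c \<le> cost_ext N G \<rho> E C p n (play \<sigma>' h t) - ereal c"
              by (intro ereal_minus_mono) auto
            then have "ereal (\<delta>^t) * (ereal Fs - ereal c)
                 \<le> ereal (\<delta>^t) * (cost_ext N G \<rho> E C p n (play \<sigma>' h t) - ereal c)"
              using d0 by (intro ereal_mult_left_mono) auto
            then show ?thesis using False False2 by (simp add: l_def)
          qed
        qed
        have lnn: "0 \<le> ereal (l t)" for t
          using Fcc Fsc Flc d0 by (simp add: l_def)
        have lsum: "l sums (\<delta>^(Suc T) * (Fs - c) / (1-\<delta>) + (\<Sum>i<Suc T. l i))"
          using d0 d1 by (intro tail_sums) (auto simp: l_def)
        have bsum2: "(\<lambda>t. \<delta>^t * (Fc - c)) sums (\<delta>^(Suc T) * (Fc - c) / (1-\<delta>) + (\<Sum>i<Suc T. \<delta>^i * (Fc - c)))"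
          using d0 d1 by (intro tail_sums) auto
        have sl: "(\<Sum>i<Suc T. l i) = (\<Sum>i<T. \<delta>^i * (Fc - c)) + \<delta>^T * (Fl n - c)"
          by (simp add: l_def)
        have sb: "(\<Sum>i<Suc T. \<delta>^i * (Fc - c)) = (\<Sum>i<T. \<delta>^i * (Fc - c)) + \<delta>^T * (Fc - c)"
          by simp
        have devn: "Fc \<le> (1-\<delta>) * Fl n + \<delta> * Fs" using dev n by (simp add: Fc_def Fs_def)
        have ineq: "\<delta>^(Suc T) * (Fc - c) / (1-\<delta>) + \<delta>^T * (Fc - c)
              \<le> \<delta>^(Suc T) * (Fs - c) / (1-\<delta>) + \<delta>^T * (Fl n - c)"
        proof -
          have "0 \<le> \<delta>^T / (1-\<delta>) * (\<delta> * (Fs - Fc) + (1-\<delta>) * (Fl n - Fc))"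
            using d0 d1 devn by (intro mult_nonneg_nonneg) (auto simp: algebra_simps)
          moreover have "\<delta>^T / (1-\<delta>) * (\<delta> * (Fs - Fc) + (1-\<delta>) * (Fl n - Fc))
             = (\<delta>^(Suc T) * (Fs - c) / (1-\<delta>) + \<delta>^T * (Fl n - c))
               - (\<delta>^(Suc T) * (Fc - c) / (1-\<delta>) + \<delta>^T * (Fc - c))"
          proof -
            have q: "1 - \<delta> \<noteq> 0" using d1 by simp
            show ?thesis using q by (simp add: divide_simps) (simp add: algebra_simps)
          qed
          ultimately show ?thesis by simp
        qed
        have "(\<Sum>t. ereal (\<delta>^t) * (cost_ext N G \<rho> E C p n (play ?\<sigma> h t) - ereal c))
              = ereal (\<delta>^(Suc T) * (Fc - c) / (1-\<delta>) + (\<Sum>i<Suc T. \<delta>^i * (Fc - c)))"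
          unfolding g_eq using bsum2 by (simp add: sums_ereal[symmetric] sums_unique[symmetric])
        also have "\<dots> \<le> ereal (\<delta>^(Suc T) * (Fs - c) / (1-\<delta>) + (\<Sum>i<Suc T. l i))"
          using ineq sl sb by simp
        also have "\<dots> = (\<Sum>t. ereal (l t))"
          using lsum by (simp add: sums_ereal[symmetric] sums_unique)
        also have "\<dots> \<le> (\<Sum>t. ereal (\<delta>^t) * (cost_ext N G \<rho> E C p n (play \<sigma>' h t) - ereal c))"
          using lle lnn by (intro suminf_le_pos) auto
        finally show ?thesis .
      qed
    qed
    show "disc_cost N G \<rho> E C p \<delta> n (play ?\<sigma> h) \<le> disc_cost N G \<rho> E C p \<delta> n (play (?\<sigma>(n := \<tau>)) h)"
      using key unfolding disc_cost_def c_def \<sigma>'_def by (intro add_right_mono)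
  qed
qed


lemma tangent_aux:
  fixes s s0 :: real
  assumes "s > 0" "s0 > 0"
  shows "1/s \<ge> 1/s0 - (s^2 - s0^2) / (2 * s0^3)"
proof -
  have "0 \<le> (s - s0)^2 * (s + 2 * s0)" using assms by simp
  then have "0 \<le> s^3 - 3 * s * s0^2 + 2 * s0^3" by (simp add: power2_eq_square power3_eq_cube algebra_simps)
  then have "0 \<le> (s^3 - 3 * s * s0^2 + 2 * s0^3) / (2 * s * s0^3)" using assms by simp
  moreover have "(s^3 - 3 * s * s0^2 + 2 * s0^3) / (2 * s * s0^3) = 1/s - (1/s0 - (s^2 - s0^2) / (2 * s0^3))"
    using assms by (simp add: field_simps power2_eq_square power3_eq_cube)
  ultimately show ?thesis by simp
qed

lemma br_cond:
  fixes x :: "nat \<Rightarrow> real"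
  assumes G: "G \<ge> 1" and n: "n \<in> {1..N}" and \<rho>: "\<rho> n > 0" and En: "E n > 0"
    and u0: "total N x > 0"
    and sgn: "(z - x n) * (2 * sqrt (real G) * total N x * sqrt (total N x) - \<rho> n / E n) \<ge> 0"
  shows "cost_ext N G \<rho> E C p n x \<le> cost_ext N G \<rho> E C p n (x(n:=z))"
proof (cases "total N (x(n:=z)) \<le> 0")
  case True
  then show ?thesis by (simp add: cost_ext_def)
next
  case False
  define u0 where "u0 = total N x"
  define u where "u = total N (x(n:=z))"
  have uu: "u = u0 - x n + z" using total_update[OF n] by (simp add: u_def u0_def)
  have upos: "u > 0" using False u_def by simp
  have u0pos: "u0 > 0" using u0 u0_def by simp
  define s where "s = sqrt u"
  define s0 where "s0 = sqrt u0"
  define g where "g = sqrt (real G)"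
  have gpos: "g > 0" using G by (simp add: g_def)
  have spos: "s > 0" and s0pos: "s0 > 0" using upos u0pos by (auto simp: s_def s0_def)
  have ss: "s^2 = u" and ss0: "s0^2 = u0" using upos u0pos by (auto simp: s_def s0_def)
  have sq1: "sqrt (real G * u) = g * s" by (simp add: g_def s_def real_sqrt_mult)
  have sq0: "sqrt (real G * u0) = g * s0" by (simp add: g_def s0_def real_sqrt_mult)
  define W where "W = 2 * g * s0^3"
  have Wpos: "W > 0" using gpos s0pos by (simp add: W_def)
  have Wdef: "2 * sqrt (real G) * total N x * sqrt (total N x) = W"
    using s0pos by (simp add: W_def g_def u0_def[symmetric] s0_def[symmetric] ss0[symmetric] power2_eq_square power3_eq_cube)
  have tan: "1/s \<ge> 1/s0 - (z - x n) / (2 * s0^3)"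
    using tangent_aux[OF spos s0pos] ss ss0 uu by simp
  have diff: "cost N G \<rho> E C p n (x(n:=z)) - cost N G \<rho> E C p n x
      = \<rho> n / g * (1/s - 1/s0) + E n * (z - x n)"
    unfolding cost_def u_def[symmetric] u0_def[symmetric] sq1 sq0
    using gpos spos s0pos by (simp add: field_simps)
  have tan2: "1/s - 1/s0 \<ge> - ((z - x n) / (2 * s0^3))" using tan by linarith
  have "\<rho> n / g * (1/s - 1/s0) \<ge> \<rho> n / g * (- ((z - x n) / (2 * s0^3)))"
    using tan2 \<rho> gpos by (intro mult_left_mono) auto
  moreover have "\<rho> n / g * (- ((z - x n) / (2 * s0^3))) = - \<rho> n * (z - x n) / W"
    using gpos s0pos by (simp add: W_def field_simps)
  moreover have "- \<rho> n * (z - x n) / W + E n * (z - x n) = E n * ((z - x n) * (W - \<rho> n / E n)) / W"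
    using Wpos En by (simp add: field_simps)
  moreover have "E n * ((z - x n) * (W - \<rho> n / E n)) / W \<ge> 0"
    using sgn Wdef En Wpos by simp
  ultimately have "cost N G \<rho> E C p n (x(n:=z)) - cost N G \<rho> E C p n x \<ge> 0"
    using diff by linarith
  then show ?thesis using False u0 by (simp add: cost_ext_def)
qed

lemma the_le_D:
  fixes S c D r :: real and G :: nat
  assumes G: "G \<ge> 1" and S: "S > 0" and c: "c > 0" and D: "D > 0"
    and rB: "r > 2 * sqrt (real G * S^3) / c"
    and rO: "\<not> (r > D * sqrt (real G) / (1/sqrt S - 1/sqrt (S + c * D)))"
  shows "(THE y. y > 0 \<and> r = sqrt (real G) * y / (1/sqrt S - 1/sqrt (S + c*y))) \<le> D"
proof -
  define g where "g = sqrt (real G)"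
  have gpos: "g > 0" using G by (simp add: g_def)
  define gt where "gt = (\<lambda>y. g * sqrt S * sqrt (S + c*y) * (sqrt (S + c*y) + sqrt S) / c)"
  have key: "g * y / (1/sqrt S - 1/sqrt (S + c*y)) = gt y" if y: "y > 0" for y
  proof -
    define a where "a = sqrt S"
    define b where "b = sqrt (S + c*y)"
    have apos: "a > 0" using S by (simp add: a_def)
    have ab: "a < b" using S c y by (simp add: a_def b_def)
    have yy: "y = (b - a) * (b + a) / c"
      using S c y by (simp add: a_def b_def field_simps power2_eq_square[symmetric])
    have "1/a - 1/b = (b - a) / (a*b)" using apos ab by (simp add: field_simps)
    then have "g * y / (1/a - 1/b) = g * a * b * (b + a) / c"
      unfolding yy using apos ab c by (simp add: field_simps)
    then show ?thesis by (simp add: gt_def a_def b_def)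
  qed
  have gt0: "gt 0 = 2 * sqrt (real G * S^3) / c"
  proof -
    have "sqrt (S^3) = S * sqrt S" using S
      by (simp add: power3_eq_cube real_sqrt_mult)
    then show ?thesis using S by (simp add: gt_def g_def real_sqrt_mult)
  qed
  have mono: "gt y1 < gt y2" if "0 \<le> y1" "y1 < y2" for y1 y2
  proof -
    have "sqrt (S + c*y1) < sqrt (S + c*y2)" using that c S by simp
    moreover have "0 \<le> sqrt (S + c*y1)" using that c S by simp
    ultimately have "sqrt (S + c*y1) * (sqrt (S + c*y1) + sqrt S) < sqrt (S + c*y2) * (sqrt (S + c*y2) + sqrt S)"
      using S by (intro mult_strict_mono) auto
    then have "g * sqrt S * (sqrt (S + c*y1) * (sqrt (S + c*y1) + sqrt S))
             < g * sqrt S * (sqrt (S + c*y2) * (sqrt (S + c*y2) + sqrt S))"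
      using gpos S by (intro mult_strict_left_mono) auto
    then show ?thesis unfolding gt_def using c by (simp add: divide_strict_right_mono mult.assoc)
  qed
  have gtD: "gt D \<ge> r" using rO key[OF D] by (simp add: g_def mult.commute not_less)
  have cont: "continuous_on {0..D} gt"
    unfolding gt_def using c by (intro continuous_intros) auto
  obtain y where y: "0 \<le> y" "y \<le> D" "gt y = r"
    using IVT'[of gt 0 r D, OF _ gtD _ cont] gt0 rB D by auto
  have ypos: "y > 0" using y gt0 rB by (metis less_eq_real_def less_irrefl)
  have P: "y > 0 \<and> r = sqrt (real G) * y / (1/sqrt S - 1/sqrt (S + c*y))"
    using key[OF ypos] y ypos by (simp add: g_def)
  have uniq: "y' = y" if "y' > 0 \<and> r = sqrt (real G) * y' / (1/sqrt S - 1/sqrt (S + c*y'))" for y'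
  proof -
    have "gt y' = r" using key[of y'] that by (simp add: g_def)
    then show ?thesis using mono[of y y'] mono[of y' y] y ypos that
      by (metis less_imp_le linorder_neqE_linordered_idom less_irrefl)
  qed
  have "(THE y. y > 0 \<and> r = sqrt (real G) * y / (1/sqrt S - 1/sqrt (S + c*y))) = y"
    using P uniq by (intro the_equality) auto
  then show ?thesis using y by simp
qed


lemma sum_piece3:
  fixes a b d :: real
  assumes "1 \<le> k" "k \<le> N"
  shows "(\<Sum>i\<in>{1..N}. if i < k then a else if i = k then b else d)
         = (real k - 1) * a + b + (real N - real k) * d"
  using assms
proof (induction N)
  case 0
  then show ?case by simp
next
  case (Suc N)
  show ?case
  proof (cases "k = Suc N")
    case True
    have "(\<Sum>i\<in>{1..N}. if i < k then a else if i = k then b else d) = (\<Sum>i\<in>{1..N}. a)"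
      using True by (intro sum.cong) auto
    then show ?thesis using True by (simp add: algebra_simps)
  next
    case False
    then have "k \<le> N" using Suc by simp
    then show ?thesis using Suc False by (simp add: algebra_simps)
  qed
qed

lemma sum_band:
  fixes xc :: real
  assumes "1 \<le> l" "l \<le> k" "k \<le> N"
  shows "(\<Sum>i\<in>{1..N}. if l \<le> i \<and> i < k then xc else 0) = (real k - real l) * xc"
proof -
  have "(\<Sum>i\<in>{1..N}. if l \<le> i \<and> i < k then xc else 0) = (\<Sum>i\<in>{1..N}. if i \<in> {l..<k} then xc else 0)"
    by (intro sum.cong) auto
  also have "\<dots> = (\<Sum>i\<in>{1..N} \<inter> {l..<k}. xc)"
    by (rule sum.inter_restrict[symmetric]) simp
  also have "{1..N} \<inter> {l..<k} = {l..<k}" using assms by auto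
  finally show ?thesis using assms by (simp add: of_nat_diff)
qed


lemma common:
  fixes N G k l :: nat and D p \<delta> xk xc S W :: real
    and \<rho> E C xstar xcoop y :: "nat \<Rightarrow> real"
  assumes G: "G \<ge> 1" and D: "D > 0"
    and pos: "\<forall>n\<in>{1..N}. \<rho> n > 0 \<and> E n > 0"
    and l1: "1 \<le> l" and lk: "l + 2 \<le> k" and kN: "k \<le> N"
    and xk0: "0 \<le> xk" and xkD: "xk \<le> D" and xc0: "0 < xc" and xcD: "xc \<le> D"
    and Sdef: "S = (real N - real k) * D + xk" and Spos: "S > 0"
    and Wdef: "W = 2 * sqrt (real G) * S * sqrt S"
    and below: "\<forall>n\<in>{1..N}. n < k \<longrightarrow> \<rho> n / E n \<le> W"
    and above: "\<forall>n\<in>{1..N}. n > k \<longrightarrow> \<rho> n / E n \<ge> W"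
    and atk1: "xk > 0 \<longrightarrow> \<rho> k / E k \<ge> W" and atk2: "xk < D \<longrightarrow> \<rho> k / E k \<le> W"
    and xs: "\<forall>n\<in>{1..N}. xstar n = (if n < k then 0 else if n = k then xk else D)"
    and xcp: "\<forall>n\<in>{1..N}. xcoop n = (if n < l then 0 else if n < k then xc else if n = k then xk else D)"
    and y: "\<forall>n\<in>{1..N}. y n \<in> {0..D} \<and>
           (\<forall>z\<in>{0..D}. cost_ext N G \<rho> E C p n (xcoop(n := y n))
                           \<le> cost_ext N G \<rho> E C p n (xcoop(n := z)))"
    and d0: "0 \<le> \<delta>" and d1: "\<delta> < 1"
    and dM: "\<delta> \<ge> Max ((delta_th N G \<rho> E C p xstar xcoop y) ` {1..N})"
  shows "is_SPNE N G D \<rho> E C p \<delta> (trigger N xstar xcoop)"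
proof -
  let ?Fl = "\<lambda>n. cost N G \<rho> E C p n (xcoop(n := y n))"
  have k1: "1 \<le> k" using l1 lk by simp
  have rng: "\<forall>i\<in>{1..N}. xstar i \<in> {0..D} \<and> xcoop i \<in> {0..D}"
    using xs xcp xk0 xkD xc0 xcD D by auto
  have tsS: "total N xstar = S"
  proof -
    have "total N xstar = (\<Sum>i\<in>{1..N}. if i < k then 0 else if i = k then xk else D)"
      unfolding total_def using xs by (intro sum.cong) auto
    then show ?thesis using sum_piece3[OF k1 kN, of 0 xk D] Sdef by simp
  qed
  have tcS: "total N xcoop = S + (real k - real l) * xc"
  proof -
    have "total N xcoop - total N xstar = (\<Sum>i\<in>{1..N}. xcoop i - xstar i)"
      unfolding total_def by (simp add: sum_subtractf)
    also have "\<dots> = (\<Sum>i\<in>{1..N}. if l \<le> i \<and> i < k then xc else 0)"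
      using xs xcp lk by (intro sum.cong) auto
    also have "\<dots> = (real k - real l) * xc" using sum_band[OF l1 _ kN, of xc] lk by simp
    finally show ?thesis using tsS by simp
  qed
  have klx: "(real k - real l) * xc \<ge> 2 * xc" using lk xc0
    by (intro mult_right_mono) auto
  have diffn: "xcoop n - xstar n \<le> xc" if "n \<in> {1..N}" for n
    using that xs xcp xc0 lk by auto
  have xsn: "S - xstar n \<ge> 0" if "n \<in> {1..N}" for n
    using total_minus_nonneg[OF that, of xstar] rng tsS that by auto
  have tcu: "total N (xcoop(n := z)) \<ge> S - xstar n + xc + z" if "n \<in> {1..N}" for n z
    using total_update[OF that, of xcoop z] tcS klx diffn[OF that] by linarith
  have NE: "\<forall>n\<in>{1..N}. \<forall>z\<in>{0..D}. cost_ext N G \<rho> E C p n xstar \<le> cost_ext N G \<rho> E C p n (xstar(n:=z))"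
  proof (intro ballI)
    fix n z assume n: "n \<in> {1..N}" and z: "z \<in> {0..D}"
    have W': "2 * sqrt (real G) * total N xstar * sqrt (total N xstar) = W" using tsS Wdef by simp
    have "(z - xstar n) * (W - \<rho> n / E n) \<ge> 0"
    proof -
      consider "n < k" | "n = k" | "n > k" by linarith
      then show ?thesis
      proof cases
        case 1
        then show ?thesis using xs n z below by (intro mult_nonneg_nonneg) auto
      next
        case 3
        then show ?thesis using xs n z above by (intro mult_nonpos_nonpos) auto
      next
        case 2
        consider "xk = 0" | "xk = D" | "0 < xk \<and> xk < D" using xk0 xkD by linarith
        then show ?thesis
        proof cases
          case 1
          then show ?thesis using 2 xs n z atk2 D by (intro mult_nonneg_nonneg) auto
        next
          case b: 2
          then show ?thesis using 2 xs n z atk1 D by (intro mult_nonpos_nonpos) auto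
        next
          case 3
          then have "\<rho> k / E k = W" using atk1 atk2 by auto
          then show ?thesis using 2 by simp
        qed
      qed
    qed
    then show "cost_ext N G \<rho> E C p n xstar \<le> cost_ext N G \<rho> E C p n (xstar(n:=z))"
      using pos n tsS Spos W' by (intro br_cond[OF G n]) auto
  qed
  have Flpos: "total N (xcoop(n := y n)) > 0" if "n \<in> {1..N}" for n
    using tcu[OF that, of "y n"] xsn[OF that] xc0 y that by force
  have Flb: "\<forall>n\<in>{1..N}. \<forall>z\<in>{0..D}. ereal (?Fl n) \<le> cost_ext N G \<rho> E C p n (xcoop(n:=z))"
  proof (intro ballI)
    fix n z assume n: "n \<in> {1..N}" and z: "z \<in> {0..D}"
    have "cost_ext N G \<rho> E C p n (xcoop(n := y n)) \<le> cost_ext N G \<rho> E C p n (xcoop(n := z))"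
      using y n z by blast
    then show "ereal (?Fl n) \<le> cost_ext N G \<rho> E C p n (xcoop(n:=z))"
      using Flpos[OF n] by (simp add: cost_ext_def)
  qed
  have Flnn: "\<forall>n\<in>{1..N}. ?Fl n - (\<rho> n / real G + C n + p) \<ge> 0"
  proof (intro ballI)
    fix n assume n: "n \<in> {1..N}"
    show "?Fl n - (\<rho> n / real G + C n + p) \<ge> 0"
      using pos y Flpos[OF n] n by (intro cost_minus_nonneg) (auto simp: less_imp_le)
  qed
  have dev: "\<forall>n\<in>{1..N}. cost N G \<rho> E C p n xcoop \<le> (1-\<delta>) * ?Fl n + \<delta> * cost N G \<rho> E C p n xstar"
  proof (intro ballI)
    fix n assume n: "n \<in> {1..N}"
    define Fc where "Fc = cost N G \<rho> E C p n xcoop"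
    define Fs where "Fs = cost N G \<rho> E C p n xstar"
    define Fl where "Fl = ?Fl n"
    define xm where "xm = xcoop(n := xstar n)"
    have tm: "total N xm \<ge> S + xc" using tcu[OF n, of "xstar n"] by (simp add: xm_def)
    have "cost_ext N G \<rho> E C p n (xcoop(n := y n)) \<le> cost_ext N G \<rho> E C p n xm"
      using y n rng by (simp add: xm_def)
    then have Flm: "Fl \<le> cost N G \<rho> E C p n xm"
      using Flpos[OF n] tm Spos xc0 by (simp add: cost_ext_def Fl_def)
    have "1 / sqrt (real G * total N xm) < 1 / sqrt (real G * S)"
      using tm Spos xc0 G by (intro divide_strict_left_mono) (auto simp: real_sqrt_mult)
    then have "cost N G \<rho> E C p n xm < Fs"
      using pos n tsS by (simp add: cost_def Fs_def xm_def)
    then have FlFs: "Fl < Fs" using Flm by simp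
    have "delta_th N G \<rho> E C p xstar xcoop y n \<le> Max ((delta_th N G \<rho> E C p xstar xcoop y) ` {1..N})"
      using n by (intro Max_ge) auto
    then have "(Fc - Fl) / (Fs - Fl) \<le> \<delta>" using dM by (simp add: delta_th_def Fc_def Fs_def Fl_def)
    then have "Fc - Fl \<le> \<delta> * (Fs - Fl)" using FlFs by (simp add: divide_le_eq)
    then show "cost N G \<rho> E C p n xcoop \<le> (1-\<delta>) * ?Fl n + \<delta> * cost N G \<rho> E C p n xstar"
      unfolding Fc_def[symmetric] Fs_def[symmetric] Fl_def[symmetric] by (simp add: algebra_simps)
  qed
  have ts: "total N xstar > 0" using tsS Spos by simp
  have tc: "total N xcoop > 0" using tcS Spos klx xc0 by linarith
  show ?thesis
    by (rule SPNE_general[OF pos rng NE ts tc Flb Flnn dev d0 d1])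
qed


lemma hval_W:
  assumes G: "G \<ge> 1" and "\<rho> n > 0" "E n > 0"
  shows "hval G \<rho> E n > 0 \<and> \<rho> n / E n = 2 * sqrt (real G) * hval G \<rho> E n * sqrt (hval G \<rho> E n)"
proof -
  define q where "q = (\<rho> n)\<^sup>2 / (4 * real G * (E n)\<^sup>2)"
  define h where "h = hval G \<rho> E n"
  have qpos: "q > 0" using assms by (simp add: q_def)
  have hq: "h = root 3 q" by (simp add: h_def hval_def q_def)
  have hpos: "h > 0" using qpos hq by simp
  have h3: "h^3 = q" using qpos hq by simp
  have "(2 * sqrt (real G) * h * sqrt h)^2 = 4 * real G * h^3"
  proof -
    have e1: "sqrt (real G) * sqrt (real G) = real G" by simp
    have e2: "sqrt h * sqrt h = h" using hpos by simp
    have "(2 * sqrt (real G) * h * sqrt h)^2 = 4 * (sqrt (real G) * sqrt (real G)) * h * h * (sqrt h * sqrt h)"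
      unfolding power2_eq_square by (simp only: ac_simps)
    then show ?thesis unfolding e1 e2 power3_eq_cube by (simp only: ac_simps)
  qed
  also have "\<dots> = 4 * real G * q" by (simp only: h3)
  also have "\<dots> = (\<rho> n / E n)^2"
  proof -
    have "real G > 0" using G by simp
    then show ?thesis unfolding q_def power_divide using assms(3) by (simp add: field_simps)
  qed
  finally have sq: "(\<rho> n / E n)^2 = (2 * sqrt (real G) * h * sqrt h)^2" by (rule sym)
  have nn1: "0 \<le> \<rho> n / E n" using assms by simp
  have nn2: "0 \<le> 2 * sqrt (real G) * h * sqrt h" using hpos by simp
  have "\<rho> n / E n = 2 * sqrt (real G) * h * sqrt h"
    by (rule power2_eq_imp_eq[OF sq nn1 nn2])
  then show ?thesis using hpos h_def by simp
qed

lemma W_mono: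
  assumes G: "G \<ge> 1" and "0 < a" "a < b"
  shows "2 * sqrt (real G) * a * sqrt a < 2 * sqrt (real G) * b * sqrt b"
proof -
  have "sqrt a < sqrt b" using assms by simp
  then have "a * sqrt a < b * sqrt b" using assms by (intro mult_strict_mono) auto
  moreover have "2 * sqrt (real G) > 0" using G by simp
  ultimately have "2 * sqrt (real G) * (a * sqrt a) < 2 * sqrt (real G) * (b * sqrt b)"
    by (intro mult_strict_left_mono)
  then show ?thesis by (simp only: mult.assoc)
qed


lemma caseA:
  fixes N G :: nat and D p \<delta> :: real
    and \<rho> E C xstar xcoop y :: "nat \<Rightarrow> real"
  assumes G: "G \<ge> 1" and D: "D > 0"
    and pos: "\<forall>n\<in>{1..N}. \<rho> n > 0 \<and> E n > 0"
    and ord: "\<forall>i\<in>{1..N}. \<forall>j\<in>{1..N}. i \<le> j \<longrightarrow> \<rho> i / E i \<le> \<rho> j / E j"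
    and TA: "typeA N G D \<rho> E xstar xcoop"
    and y: "\<forall>n\<in>{1..N}. y n \<in> {0..D} \<and>
           (\<forall>z\<in>{0..D}. cost_ext N G \<rho> E C p n (xcoop(n := y n))
                           \<le> cost_ext N G \<rho> E C p n (xcoop(n := z)))"
    and d0: "0 \<le> \<delta>" and d1: "\<delta> < 1"
    and dM: "\<delta> \<ge> Max ((delta_th N G \<rho> E C p xstar xcoop y) ` {1..N})"
  shows "is_SPNE N G D \<rho> E C p \<delta> (trigger N xstar xcoop)"
proof -
  obtain k where k: "k \<in> {1..N}" and L: "let hk = hval G \<rho> E k;
          xk = hk - (real N - real k) * D;
          S = (real N - real k) * D + xk;
          B = (\<lambda>n. 2 * sqrt (real G * S ^ 3) / (real k - real n));
          Ov = (\<lambda>n. D * sqrt (real G) /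
                    (1 / sqrt S - 1 / sqrt ((real N - real n) * D + xk)));
          P = {n\<in>{1..<k}. \<rho> n / E n > B n};
          l = (LEAST n. n \<in> P);
          xth = (if \<rho> l / E l > Ov l then D
                 else (THE y. y > 0 \<and> \<rho> l / E l =
                        sqrt (real G) * y / (1 / sqrt S - 1 / sqrt (S + (real k - real l) * y))))
      in (real N - real k) * D \<le> hk \<and> hk \<le> (real N + 1 - real k) * D \<and> P \<noteq> {} \<and>
         (\<forall>n\<in>{1..N}. xstar n = (if n < k then 0 else if n = k then xk else D)) \<and>
         (\<exists>xc. 0 < xc \<and> xc \<le> xth \<and>
            (\<forall>n\<in>{1..N}. xcoop n =
               (if n < l then 0 else if n < k then xc else if n = k then xk else D)))"
    using TA unfolding typeA_def by blast
  define hk where "hk = hval G \<rho> E k"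
  define xk where "xk = hk - (real N - real k) * D"
  define S where "S = (real N - real k) * D + xk"
  define B where "B = (\<lambda>n. 2 * sqrt (real G * S ^ 3) / (real k - real n))"
  define Ov where "Ov = (\<lambda>n. D * sqrt (real G) /
                    (1 / sqrt S - 1 / sqrt ((real N - real n) * D + xk)))"
  define P where "P = {n\<in>{1..<k}. \<rho> n / E n > B n}"
  define l where "l = (LEAST n. n \<in> P)"
  define xth where "xth = (if \<rho> l / E l > Ov l then D
                 else (THE y. y > 0 \<and> \<rho> l / E l =
                        sqrt (real G) * y / (1 / sqrt S - 1 / sqrt (S + (real k - real l) * y))))"
  have H: "(real N - real k) * D \<le> hk \<and> hk \<le> (real N + 1 - real k) * D \<and> P \<noteq> {} \<and>
         (\<forall>n\<in>{1..N}. xstar n = (if n < k then 0 else if n = k then xk else D)) \<and>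
         (\<exists>xc. 0 < xc \<and> xc \<le> xth \<and>
            (\<forall>n\<in>{1..N}. xcoop n =
               (if n < l then 0 else if n < k then xc else if n = k then xk else D)))"
    using L unfolding Let_def hk_def xk_def S_def B_def Ov_def P_def l_def xth_def .
  then obtain xc where xc0: "0 < xc" and xcth: "xc \<le> xth"
     and xcp: "\<forall>n\<in>{1..N}. xcoop n = (if n < l then 0 else if n < k then xc else if n = k then xk else D)"
    by blast
  have xs: "\<forall>n\<in>{1..N}. xstar n = (if n < k then 0 else if n = k then xk else D)" using H by blast
  have lP: "l \<in> P" using H unfolding l_def by (metis LeastI_ex ex_in_conv)
  then have l1: "1 \<le> l" and lk0: "l < k" and rl: "\<rho> l / E l > B l" unfolding P_def by auto
  have kk: "1 \<le> k" "k \<le> N" using k by auto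
  have SH: "S = hk" by (simp add: S_def xk_def)
  have hW: "hk > 0 \<and> \<rho> k / E k = 2 * sqrt (real G) * hk * sqrt hk"
    using hval_W[OF G, of \<rho> k E] pos k unfolding hk_def by auto
  define W where "W = 2 * sqrt (real G) * S * sqrt S"
  have Spos: "S > 0" using hW SH by simp
  have Wpos: "W > 0" using Spos G by (simp add: W_def)
  have rk: "\<rho> k / E k = W" using hW SH by (simp add: W_def)
  have S3: "sqrt (real G * S ^ 3) = sqrt (real G) * S * sqrt S"
    using Spos by (simp add: real_sqrt_mult power3_eq_cube)
  have Bl: "B l = W / (real k - real l)" by (simp add: B_def S3 W_def)
  have rlk: "\<rho> l / E l \<le> W" using ord l1 lk0 kk rk by auto
  have lk: "l + 2 \<le> k"
  proof (rule ccontr)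
    assume "\<not> l + 2 \<le> k"
    then have "k = l + 1" using lk0 by simp
    then have "B l = W" using Bl by simp
    then show False using rl rlk by simp
  qed
  have xkr: "0 \<le> xk" "xk \<le> D" using H by (auto simp: xk_def algebra_simps)
  have xthD: "xth \<le> D"
  proof (cases "\<rho> l / E l > Ov l")
    case True
    then show ?thesis by (simp add: xth_def)
  next
    case False
    have eqO: "(real N - real l) * D + xk = S + (real k - real l) * D" by (simp add: S_def algebra_simps)
    have cpos: "real k - real l > 0" using lk0 by simp
    have "(THE y. y > 0 \<and> \<rho> l / E l =
              sqrt (real G) * y / (1 / sqrt S - 1 / sqrt (S + (real k - real l) * y))) \<le> D"
      using False rl by (intro the_le_D[OF G Spos cpos D]) (auto simp: Ov_def eqO B_def)
    then show ?thesis using False by (simp add: xth_def)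
  qed
  show ?thesis
  proof (rule common[OF G D pos l1 lk kk(2) xkr xc0 _ S_def Spos W_def _ _ _ _ xs xcp y d0 d1 dM])
    show "xc \<le> D" using xcth xthD by simp
    show "\<forall>n\<in>{1..N}. n < k \<longrightarrow> \<rho> n / E n \<le> W" using ord kk rk by auto
    show "\<forall>n\<in>{1..N}. n > k \<longrightarrow> \<rho> n / E n \<ge> W" using ord kk rk by force
    show "0 < xk \<longrightarrow> W \<le> \<rho> k / E k" using rk by simp
    show "xk < D \<longrightarrow> \<rho> k / E k \<le> W" using rk by simp
  qed
qed


lemma caseB:
  fixes N G :: nat and D p \<delta> :: real
    and \<rho> E C xstar xcoop y :: "nat \<Rightarrow> real"
  assumes G: "G \<ge> 1" and D: "D > 0"
    and pos: "\<forall>n\<in>{1..N}. \<rho> n > 0 \<and> E n > 0"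
    and ord: "\<forall>i\<in>{1..N}. \<forall>j\<in>{1..N}. i \<le> j \<longrightarrow> \<rho> i / E i \<le> \<rho> j / E j"
    and TB: "typeB N G D \<rho> E xstar xcoop"
    and y: "\<forall>n\<in>{1..N}. y n \<in> {0..D} \<and>
           (\<forall>z\<in>{0..D}. cost_ext N G \<rho> E C p n (xcoop(n := y n))
                           \<le> cost_ext N G \<rho> E C p n (xcoop(n := z)))"
    and d0: "0 \<le> \<delta>" and d1: "\<delta> < 1"
    and dM: "\<delta> \<ge> Max ((delta_th N G \<rho> E C p xstar xcoop y) ` {1..N})"
  shows "is_SPNE N G D \<rho> E C p \<delta> (trigger N xstar xcoop)"
proof -
  obtain m where m: "m \<in> {1..N-1}" and L: "let T = (real N - real m) * D;
          B = (\<lambda>n. 2 * sqrt (real G * T ^ 3) / (real m - real n + 1));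
          Ov = (\<lambda>n. D * sqrt (real G) /
                    (1 / sqrt T - 1 / sqrt ((real N - real n + 1) * D)));
          P = {n\<in>{1..m}. \<rho> n / E n > B n};
          l = (LEAST n. n \<in> P);
          xth = (if \<rho> l / E l > Ov l then D
                 else (THE y. y > 0 \<and> \<rho> l / E l =
                        sqrt (real G) * y / (1 / sqrt T - 1 / sqrt (T + (real m - real l + 1) * y))))
      in hval G \<rho> E m < T \<and> T < hval G \<rho> E (m + 1) \<and> P \<noteq> {} \<and>
         (\<forall>n\<in>{1..N}. xstar n = (if n \<le> m then 0 else D)) \<and>
         (\<exists>xc. 0 < xc \<and> xc \<le> xth \<and>
            (\<forall>n\<in>{1..N}. xcoop n = (if n < l then 0 else if n \<le> m then xc else D)))"
    using TB unfolding typeB_def by blast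
  define T where "T = (real N - real m) * D"
  define B where "B = (\<lambda>n. 2 * sqrt (real G * T ^ 3) / (real m - real n + 1))"
  define Ov where "Ov = (\<lambda>n. D * sqrt (real G) /
                    (1 / sqrt T - 1 / sqrt ((real N - real n + 1) * D)))"
  define P where "P = {n\<in>{1..m}. \<rho> n / E n > B n}"
  define l where "l = (LEAST n. n \<in> P)"
  define xth where "xth = (if \<rho> l / E l > Ov l then D
                 else (THE y. y > 0 \<and> \<rho> l / E l =
                        sqrt (real G) * y / (1 / sqrt T - 1 / sqrt (T + (real m - real l + 1) * y))))"
  have H: "hval G \<rho> E m < T \<and> T < hval G \<rho> E (m + 1) \<and> P \<noteq> {} \<and>
         (\<forall>n\<in>{1..N}. xstar n = (if n \<le> m then 0 else D)) \<and>
         (\<exists>xc. 0 < xc \<and> xc \<le> xth \<and>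
            (\<forall>n\<in>{1..N}. xcoop n = (if n < l then 0 else if n \<le> m then xc else D)))"
    using L unfolding Let_def T_def B_def Ov_def P_def l_def xth_def .
  then obtain xc where xc0: "0 < xc" and xcth: "xc \<le> xth"
     and xcp0: "\<forall>n\<in>{1..N}. xcoop n = (if n < l then 0 else if n \<le> m then xc else D)"
    by blast
  have mm: "1 \<le> m" "m + 1 \<le> N" using m by auto
  have lP: "l \<in> P" using H unfolding l_def by (metis LeastI_ex ex_in_conv)
  then have l1: "1 \<le> l" and lm0: "l \<le> m" and rl: "\<rho> l / E l > B l" unfolding P_def by auto
  have xs: "\<forall>n\<in>{1..N}. xstar n = (if n < m + 1 then 0 else if n = m + 1 then D else D)"
    using H by auto
  have xcp: "\<forall>n\<in>{1..N}. xcoop n = (if n < l then 0 else if n < m + 1 then xc else if n = m + 1 then D else D)"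
    using xcp0 by auto
  have Sdef: "T = (real N - real (m + 1)) * D + D" by (simp add: T_def algebra_simps)
  have hm: "hval G \<rho> E m > 0 \<and> \<rho> m / E m = 2 * sqrt (real G) * hval G \<rho> E m * sqrt (hval G \<rho> E m)"
    using hval_W[OF G, of \<rho> m E] pos mm by auto
  have hm1: "hval G \<rho> E (m+1) > 0 \<and> \<rho> (m+1) / E (m+1) = 2 * sqrt (real G) * hval G \<rho> E (m+1) * sqrt (hval G \<rho> E (m+1))"
    using hval_W[OF G, of \<rho> "m+1" E] pos mm by auto
  define W where "W = 2 * sqrt (real G) * T * sqrt T"
  have Tpos: "T > 0" using hm H by linarith
  have Wpos: "W > 0" using Tpos G by (simp add: W_def)
  have rm: "\<rho> m / E m < W" using hm H W_mono[OF G, of "hval G \<rho> E m" T] by (simp add: W_def)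
  have rm1: "\<rho> (m+1) / E (m+1) > W" using hm1 H W_mono[OF G, of T "hval G \<rho> E (m+1)"] Tpos
    by (simp add: W_def)
  have S3: "sqrt (real G * T ^ 3) = sqrt (real G) * T * sqrt T"
    using Tpos by (simp add: real_sqrt_mult power3_eq_cube)
  have Bl: "B l = W / (real m - real l + 1)" by (simp add: B_def S3 W_def)
  have rlm: "\<rho> l / E l \<le> \<rho> m / E m" using ord l1 lm0 mm by auto
  have lk: "l + 2 \<le> m + 1"
  proof (rule ccontr)
    assume "\<not> l + 2 \<le> m + 1"
    then have "l = m" using lm0 by simp
    then have "B l = W" using Bl by simp
    then show False using rl rlm rm by simp
  qed
  have xthD: "xth \<le> D"
  proof (cases "\<rho> l / E l > Ov l")
    case True
    then show ?thesis by (simp add: xth_def)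
  next
    case False
    have eqO: "(real N - real l + 1) * D = T + (real m - real l + 1) * D" by (simp add: T_def algebra_simps)
    have cpos: "real m - real l + 1 > 0" using lm0 by simp
    have "(THE y. y > 0 \<and> \<rho> l / E l =
              sqrt (real G) * y / (1 / sqrt T - 1 / sqrt (T + (real m - real l + 1) * y))) \<le> D"
      using False rl by (intro the_le_D[OF G Tpos cpos D]) (auto simp: Ov_def eqO B_def)
    then show ?thesis using False by (simp add: xth_def)
  qed
  have DD: "0 \<le> D" "D \<le> D" using D by auto
  show ?thesis
  proof (rule common[OF G D pos l1 lk mm(2) DD xc0 _ Sdef Tpos W_def _ _ _ _ xs xcp y d0 d1 dM])
    show "xc \<le> D" using xcth xthD by simp
    show "\<forall>n\<in>{1..N}. n < m + 1 \<longrightarrow> \<rho> n / E n \<le> W"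
    proof (intro ballI impI)
      fix n assume "n \<in> {1..N}" "n < m + 1"
      then have "\<rho> n / E n \<le> \<rho> m / E m" using ord mm by auto
      then show "\<rho> n / E n \<le> W" using rm by simp
    qed
    show "\<forall>n\<in>{1..N}. n > m + 1 \<longrightarrow> \<rho> n / E n \<ge> W"
    proof (intro ballI impI)
      fix n assume "n \<in> {1..N}" "n > m + 1"
      then have "\<rho> (m+1) / E (m+1) \<le> \<rho> n / E n" using ord mm by auto
      then show "\<rho> n / E n \<ge> W" using rm1 by simp
    qed
    show "0 < D \<longrightarrow> W \<le> \<rho> (m + 1) / E (m + 1)" using rm1 by simp
    show "D < D \<longrightarrow> \<rho> (m + 1) / E (m + 1) \<le> W" by simp
  qed
qed

theorem theorem5:
  fixes N G :: nat and D p \<delta> :: real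
    and \<rho> E C xstar xcoop y :: "nat \<Rightarrow> real"
  assumes "G \<ge> 1" and "D > 0"
    and "\<forall>n\<in>{1..N}. \<rho> n > 0 \<and> E n > 0"
    and "\<forall>i\<in>{1..N}. \<forall>j\<in>{1..N}. i \<le> j \<longrightarrow> \<rho> i / E i \<le> \<rho> j / E j"
    and "typeA N G D \<rho> E xstar xcoop \<or> typeB N G D \<rho> E xstar xcoop"
    and "\<forall>n\<in>{1..N}. y n \<in> {0..D} \<and>
           (\<forall>z\<in>{0..D}. cost_ext N G \<rho> E C p n (xcoop(n := y n))
                           \<le> cost_ext N G \<rho> E C p n (xcoop(n := z)))"
    and "0 \<le> \<delta>" and "\<delta> < 1"
    and "\<delta> \<ge> Max ((delta_th N G \<rho> E C p xstar xcoop y) ` {1..N})"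
  shows "is_SPNE N G D \<rho> E C p \<delta> (trigger N xstar xcoop)"
  using assms(5)
proof
  assume "typeA N G D \<rho> E xstar xcoop"
  then show ?thesis using caseA assms by blast
next
  assume "typeB N G D \<rho> E xstar xcoop"
  then show ?thesis using caseB assms by blast
qed

end
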